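(* Let $\Gamma$ be a finite abelian group, $\sigma\colon\Gamma\times\Gamma\to\mathbb{C}^\times$ a symmetric nondegenerate bimultiplicative form, $\varepsilon\in\{\pm1\}$, $q\colon\Gamma\to\mathbb{C}^\times$ a quadratic form with $\sigma(a,b)=q(a+b)q(a)^{-1}q(b)^{-1}$, $\alpha\in\mathbb{C}$ with $\alpha^2=\varepsilon|\Gamma|^{-1/2}\sum_{a\in\Gamma}q(a)^{-1}$, and $\beta\in\{\alpha^{-1},-\alpha^{-1}\}$. Consider the $\mathbb{Z}_2$-crossed ribbon fusion category $\mathcal{TY}(\Gamma,\sigma,\varepsilon\,|\,q,\alpha,\beta)$ described in the context. Then the quantum dimensions of all simple objects of $\mathcal{TY}(\Gamma,\sigma,\varepsilon\,|\,q,\alpha,\beta)$ coincide with their Frobenius–Perron dimensions if and only if $\alpha\beta=\varepsilon$.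
   Context: The Tambara–Yamagami category $\mathcal{TY}(\Gamma,\sigma,\varepsilon)$ is the semisimple $\mathbb{Z}_2$-graded fusion category $\operatorname{Vect}_\Gamma\oplus\operatorname{Vect}$ with simple objects $\mathbb{C}_a$ ($a\in\Gamma$, degree $0$) and $\mathsf{X}$ (degree $1$), fusion rules $\mathbb{C}_a\otimes\mathbb{C}_b=\mathbb{C}_{a+b}$, $\mathbb{C}_a\otimes\mathsf{X}=\mathsf{X}\otimes\mathbb{C}_a=\mathsf{X}$, $\mathsf{X}\otimes\mathsf{X}=\bigoplus_{t\in\Gamma}\mathbb{C}_t$, and with the only nontrivial associators: $(\mathbb{C}_a\otimes\mathsf{X})\otimes\mathbb{C}_b\to\mathbb{C}_a\otimes(\mathsf{X}\otimes\mathbb{C}_b)$ is the scalar $\sigma(a,b)$; $(\mathsf{X}\otimes\mathbb{C}_a)\otimes\mathsf{X}\to\mathsf{X}\otimes(\mathbb{C}_a\otimes\mathsf{X})$ is $\sigma(a,t)$ on the summand $\mathbb{C}_t$; $(\mathsf{X}\otimes\mathsf{X})\otimes\mathsf{X}=\bigoplus_{t\in\Gamma}\mathsf{X}\to\bigoplus_{r\in\Gamma}\mathsf{X}=\mathsf{X}\otimes(\mathsf{X}\otimes\mathsf{X})$ is the matrix with entries $\varepsilon|\Gamma|^{-1/2}\sigma(t,r)^{-1}$. Rigid structure: $\mathbb{C}_a^*=\mathbb{C}_{-a}$ with obvious (co)evaluations, $\mathsf{X}^*=\mathsf{X}$, $\mathrm{coev}_\mathsf{X}$ the inclusion of $\mathbb{C}_0$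 into $\mathsf{X}\otimes\mathsf{X}$, $\mathrm{ev}_\mathsf{X}=\varepsilon|\Gamma|^{1/2}$ times the projection onto $\mathbb{C}_0$. The group $\mathbb{Z}_2=\langle g\rangle$ acts strictly by $g_*\mathbb{C}_a=\mathbb{C}_{-a}$, $g_*\mathsf{X}=\mathsf{X}$ with trivial tensor and composition structures. The $\mathbb{Z}_2$-crossed braiding is $c_{\mathbb{C}_a,\mathbb{C}_b}=\sigma(a,b)$, $c_{\mathbb{C}_a,\mathsf{X}}=q(a)^{-1}$, $c_{\mathsf{X},\mathbb{C}_a}\colon\mathsf{X}\otimes\mathbb{C}_a\to\mathbb{C}_{-a}\otimes\mathsf{X}$ equal to $q(a)^{-1}$, and $c_{\mathsf{X},\mathsf{X}}=\alpha\,q(t)$ on the summand $\mathbb{C}_t$. The $\mathbb{Z}_2$-ribbon twist is $\theta_{\mathbb{C}_a}=q(a)^2$, $\theta_\mathsf{X}=\beta$. These data define the $\mathbb{Z}_2$-crossed ribbon category $\mathcal{TY}(\Gamma,\sigma,\varepsilon\,|\,q,\alpha,\beta)$. The quantum dimension of a simple object $Y$ is $\mathrm{ev}_Y\circ c_{Y,Y^*}\circ(\theta_Y\otimes\mathrm{id}_{Y^*})\circ\mathrm{coev}_Y$. The Frobenius–Perron dimensions are $1$ for each $\mathbb{C}_a$ and $|\Gamma|^{1/2}$ for $\mathsf{X}$. *)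

theory Defs
  imports Complex_Main
begin

text \<open>Simple objects: C a (a in Gamma, degree 0) and X (degree 1).
  The finite abelian group Gamma is the type 'g.\<close>

datatype 'g simple = C 'g | X

text \<open>A fixed enumeration of the finite group Gamma (used to order the summands of X (x) X).\<close>
definition gelems :: "'g::finite list" where
  "gelems = (SOME xs. distinct xs \<and> set xs = UNIV)"

text \<open>Semisimple objects are represented as direct sums of simples (lists of simples);
  a morphism A -> B is a matrix M with M i j the component from the j-th summand of A
  to the i-th summand of B.\<close>

type_synonym mor = "nat \<Rightarrow> nat \<Rightarrow> complex"

definition mcomp :: "'g simple list \<Rightarrow> mor \<Rightarrow> mor \<Rightarrow> mor" where
  "mcomp mid M N = (\<lambda>i k. \<Sum>j<length mid. M i j * N j k)"

fun tens :: "'g::{finite,ab_group_add} simple \<Rightarrow> 'g simple \<Rightarrow> 'g simple list" where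
  "tens (C a) (C b) = [C (a + b)]"
| "tens (C a) X = [X]"
| "tens X (C a) = [X]"
| "tens X X = map C gelems"

fun dual :: "'g::ab_group_add simple \<Rightarrow> 'g simple" where
  "dual (C a) = C (- a)"
| "dual X = X"

text \<open>Action of the generator g of Z2: g_* C a = C (-a), g_* X = X.\<close>
fun gact :: "'g::ab_group_add simple \<Rightarrow> 'g simple" where
  "gact (C a) = C (- a)"
| "gact X = X"

text \<open>Target of the crossed braiding c_{Y,Z} : Y (x) Z -> (deg Y)_* Z (x) Y.\<close>
fun braid_tgt :: "'g::{finite,ab_group_add} simple \<Rightarrow> 'g simple \<Rightarrow> 'g simple list" where
  "braid_tgt (C a) Z = tens Z (C a)"
| "braid_tgt X Z = tens (gact Z) X"

fun braid :: "('g \<Rightarrow> 'g \<Rightarrow> complex) \<Rightarrow> ('g \<Rightarrow> complex) \<Rightarrow> complex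
    \<Rightarrow> 'g::{finite,ab_group_add} simple \<Rightarrow> 'g simple \<Rightarrow> mor" where
  "braid \<sigma> q \<alpha> (C a) (C b) = (\<lambda>i j. if i = 0 \<and> j = 0 then \<sigma> a b else 0)"
| "braid \<sigma> q \<alpha> (C a) X = (\<lambda>i j. if i = 0 \<and> j = 0 then inverse (q a) else 0)"
| "braid \<sigma> q \<alpha> X (C a) = (\<lambda>i j. if i = 0 \<and> j = 0 then inverse (q a) else 0)"
| "braid \<sigma> q \<alpha> X X = (\<lambda>i j. if i = j \<and> i < length (gelems::'g list)
                                  then \<alpha> * q (gelems ! i) else 0)"

fun twist :: "('g \<Rightarrow> complex) \<Rightarrow> complex \<Rightarrow> 'g simple \<Rightarrow> complex" where
  "twist q \<beta> (C a) = q a ^ 2"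
| "twist q \<beta> X = \<beta>"

definition twist_id :: "('g \<Rightarrow> complex) \<Rightarrow> complex \<Rightarrow> 'g::{finite,ab_group_add} simple \<Rightarrow> mor" where
  "twist_id q \<beta> Y = (\<lambda>i j. if i = j \<and> i < length (tens Y (dual Y)) then twist q \<beta> Y else 0)"

definition coev :: "'g::{finite,ab_group_add} simple \<Rightarrow> mor" where
  "coev Y = (\<lambda>i j. if j = 0 \<and> i < length (tens Y (dual Y)) \<and> tens Y (dual Y) ! i = C 0
                   then 1 else 0)"

definition ev :: "complex \<Rightarrow> 'g::{finite,ab_group_add} simple \<Rightarrow> mor" where
  "ev \<epsilon> Y = (\<lambda>i j. if i = 0 \<and> j < length (tens (dual Y) Y) \<and> tens (dual Y) Y ! j = C 0
                   then (if Y = X then \<epsilon> * complex_of_real (sqrt (real (card (UNIV :: 'g set)))) else 1)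
                   else 0)"

text \<open>Quantum dimension: ev_Y o c_{Y,Y*} o (theta_Y (x) id_{Y*}) o coev_Y, a scalar
  (the unique matrix entry of an endomorphism of the unit object C 0).\<close>
definition qdim :: "('g \<Rightarrow> 'g \<Rightarrow> complex) \<Rightarrow> complex \<Rightarrow> ('g \<Rightarrow> complex) \<Rightarrow> complex \<Rightarrow> complex
    \<Rightarrow> 'g::{finite,ab_group_add} simple \<Rightarrow> complex" where
  "qdim \<sigma> \<epsilon> q \<alpha> \<beta> Y =
     mcomp (braid_tgt Y (dual Y)) (ev \<epsilon> Y)
       (mcomp (tens Y (dual Y)) (braid \<sigma> q \<alpha> Y (dual Y))
          (mcomp (tens Y (dual Y)) (twist_id q \<beta> Y) (coev Y))) 0 0"

fun fpdim :: "'g::finite simple \<Rightarrow> real" where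
  "fpdim (C a) = 1"
| "fpdim X = sqrt (real (card (UNIV :: 'g set)))"

end

theory Submission
  imports Defs
begin

lemma gelems_props: "distinct (gelems::'g::finite list) \<and> set (gelems::'g list) = UNIV"
proof -
  obtain xs :: "'g list" where "distinct xs \<and> set xs = UNIV"
    using finite_distinct_list[OF finite_UNIV] by metis
  then show ?thesis unfolding gelems_def by (rule someI)
qed

lemma gelems_len: "length (gelems::'g::finite list) = card (UNIV::'g set)"
  using gelems_props distinct_card by metis

lemma qdim_X:
  fixes \<sigma> :: "'g::{finite,ab_group_add} \<Rightarrow> 'g \<Rightarrow> complex"
  shows "qdim \<sigma> \<epsilon> q \<alpha> \<beta> X =
    \<epsilon> * complex_of_real (sqrt (real (card (UNIV :: 'g set)))) * (\<alpha> * q 0 * \<beta>)"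
proof -
  let ?L = "gelems :: 'g list"
  let ?n = "length ?L"
  obtain k where k: "k < ?n" "?L ! k = 0"
    using gelems_props by (metis UNIV_I in_set_conv_nth)
  have kk: "\<And>j. j < ?n \<Longrightarrow> ?L ! j = 0 \<longleftrightarrow> j = k"
    using k gelems_props by (metis nth_eq_iff_index_eq)
  have T: "mcomp (tens (X::'g simple) (dual X)) (twist_id q \<beta> (X::'g simple)) (coev (X::'g simple)) i 0
       = (if i < ?n \<and> i = k then \<beta> else 0)" for i
  proof -
    have "mcomp (tens (X::'g simple) (dual X)) (twist_id q \<beta> (X::'g simple)) (coev (X::'g simple)) i 0
       = (\<Sum>j<?n. (if j = i \<and> i < ?n \<and> i = k then \<beta> else 0))"
      unfolding mcomp_def twist_id_def coev_def
      by (intro sum.cong) (auto simp: kk)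
    also have "\<dots> = (if i < ?n \<and> i = k then \<beta> else 0)"
      by (auto simp: sum.delta' k)
    finally show ?thesis .
  qed
  have M: "mcomp (tens (X::'g simple) (dual X)) (braid \<sigma> q \<alpha> (X::'g simple) (dual X))
          (mcomp (tens (X::'g simple) (dual X)) (twist_id q \<beta> (X::'g simple)) (coev (X::'g simple))) i 0
       = (if i < ?n \<and> i = k then \<alpha> * q 0 * \<beta> else 0)" for i
  proof -
    have "mcomp (tens (X::'g simple) (dual X)) (braid \<sigma> q \<alpha> (X::'g simple) (dual X))
          (mcomp (tens (X::'g simple) (dual X)) (twist_id q \<beta> (X::'g simple)) (coev (X::'g simple))) i 0
       = (\<Sum>j<?n. (if j = i \<and> i < ?n \<and> i = k then \<alpha> * q 0 * \<beta> else 0))"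
      unfolding mcomp_def[of "tens X (dual X)" "braid \<sigma> q \<alpha> (X::'g simple) (dual X)"] T
      by (intro sum.cong) (auto simp: k)
    also have "\<dots> = (if i < ?n \<and> i = k then \<alpha> * q 0 * \<beta> else 0)"
      by (auto simp: sum.delta' k)
    finally show ?thesis .
  qed
  have "qdim \<sigma> \<epsilon> q \<alpha> \<beta> (X::'g simple) =
    (\<Sum>j<?n. (if j = k then \<epsilon> * complex_of_real (sqrt (real (card (UNIV :: 'g set)))) * (\<alpha> * q 0 * \<beta>) else 0))"
    unfolding qdim_def mcomp_def[of "braid_tgt (X::'g simple) (dual X)"] M
    by (intro sum.cong) (auto simp: ev_def kk)
  also have "\<dots> = \<epsilon> * complex_of_real (sqrt (real (card (UNIV :: 'g set)))) * (\<alpha> * q 0 * \<beta>)"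
    using k(1) by simp
  finally show ?thesis .
qed

lemma qdim_C:
  fixes \<sigma> :: "'g::{finite,ab_group_add} \<Rightarrow> 'g \<Rightarrow> complex"
  shows "qdim \<sigma> \<epsilon> q \<alpha> \<beta> (C a) = \<sigma> a (- a) * q a ^ 2"
  by (simp add: qdim_def mcomp_def ev_def coev_def twist_id_def)

theorem proposition3p7:
  fixes \<sigma> :: "'g::{finite,ab_group_add} \<Rightarrow> 'g \<Rightarrow> complex"
    and q :: "'g \<Rightarrow> complex"
    and \<epsilon> \<alpha> \<beta> :: complex
  assumes sigma_nz: "\<And>a b. \<sigma> a b \<noteq> 0"
    and sigma_sym: "\<And>a b. \<sigma> a b = \<sigma> b a"
    and sigma_bimult: "\<And>a b c. \<sigma> (a + b) c = \<sigma> a c * \<sigma> b c"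
    and sigma_nondeg: "\<And>a. (\<forall>b. \<sigma> a b = 1) \<Longrightarrow> a = 0"
    and eps: "\<epsilon> = 1 \<or> \<epsilon> = -1"
    and q_nz: "\<And>a. q a \<noteq> 0"
    and q_even: "\<And>a. q (- a) = q a"
    and q_sigma: "\<And>a b. \<sigma> a b = q (a + b) * inverse (q a) * inverse (q b)"
    and alpha: "\<alpha> ^ 2 = \<epsilon> * inverse (complex_of_real (sqrt (real (card (UNIV :: 'g set)))))
                           * (\<Sum>a\<in>UNIV. inverse (q a))"
    and beta: "\<beta> = inverse \<alpha> \<or> \<beta> = - inverse \<alpha>"
  shows "(\<forall>Y::'g simple. qdim \<sigma> \<epsilon> q \<alpha> \<beta> Y = complex_of_real (fpdim Y))
           \<longleftrightarrow> \<alpha> * \<beta> = \<epsilon>"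
proof -
  have s00: "\<sigma> 0 0 = \<sigma> 0 0 * \<sigma> 0 0" using sigma_bimult[of 0 0 0] by simp
  hence s1: "\<sigma> 0 0 = 1" using sigma_nz[of 0 0] by simp
  have "\<sigma> 0 0 = inverse (q 0)" using q_sigma[of 0 0] q_nz[of 0] by (simp add: field_simps)
  hence q0: "q 0 = 1" using s1 by (metis inverse_1 inverse_inverse_eq)
  have qC: "qdim \<sigma> \<epsilon> q \<alpha> \<beta> (C a) = 1" for a
    using q_sigma[of a "-a"] q_even[of a] q_nz[of a] q0
    by (simp add: qdim_C field_simps power2_eq_square)
  define s where "s = complex_of_real (sqrt (real (card (UNIV :: 'g set))))"
  have snz: "s \<noteq> 0" unfolding s_def by simp
  have qX: "qdim \<sigma> \<epsilon> q \<alpha> \<beta> (X::'g simple) = \<epsilon> * s * (\<alpha> * \<beta>)"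
    unfolding qdim_X s_def q0 by simp
  have ee: "\<epsilon> * \<epsilon> = 1" using eps by auto
  have "(\<forall>Y::'g simple. qdim \<sigma> \<epsilon> q \<alpha> \<beta> Y = complex_of_real (fpdim Y))
        \<longleftrightarrow> \<epsilon> * s * (\<alpha> * \<beta>) = s"
    by (metis fpdim.simps qC qX s_def simple.exhaust of_real_1)
  also have "\<dots> \<longleftrightarrow> \<epsilon> * (\<alpha> * \<beta>) = 1" using snz
    by (metis mult.assoc mult.commute mult_cancel_left mult_1_right)
  also have "\<dots> \<longleftrightarrow> \<alpha> * \<beta> = \<epsilon>" using ee
    by (metis mult.assoc mult.commute mult_1_right)
  finally show ?thesis .
qed

end
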